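(* Let $X$ be a hyperbolic approximation of a metric space $Z$, with vertex set $V$. Assume that for some $v,v'\in V$ there is a vertex $v''\in V$ with $l(v'')\le l(v)$, $l(v'')\le l(v')$, and such that $B(v'')$ intersects both $B(v)$ and $B(v')$. Then there exists a cone point $w$ of $\{v,v',v''\}$ with $l(w)=l(v'')-1$.
   Context: Hyperbolic approximation: let $(Z,d)$ be a metric space and fix $r$ with $0<r\le1/6$. For every $k\in\mathbb{Z}$ choose a maximal $r^k$-separated set $V_k\subset Z$ (distinct points at distance $\ge r^k$, maximal with this property). For $v\in V_k$ let $B(v)$ be the ball in $Z$ of radius $2r^k$ centred at $v$, $\bar B(v)$ the closed ball. The vertex set $V$ consists, for each $k$, of the balls $B(v)$, $v\in V_k$ (equal balls from the same level give the same vertex; equal balls at different levels are different vertices); a vertex from level $k$ has level $l(v)=k$. Two vertices are joined by an edge iff they are on the same level and their closed balls intersect (horizontal edge), or they are on neighbouring levels $k,k+1$ and the ball of the level-$(k+1)$ vertex is contained in the ball of the level-$k$ vertex (radial edge). $X$ carries the path metric with all edges of length $1$. A radial geodesic is an edge path all of whose edges are radial and along which the level function is monotone. For $V'\subset V$, a vertex $u$ is a cone point of $V'$ if $l(u)\le\inf_{v\in V'}l(v)$ and every $v\in V'$ is connected to $u$ by a radial geodesic. *)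

theory Defs
  imports "HOL-Analysis.Analysis"
begin

text \<open>Hyperbolic approximation of a metric space Z (taken to be the whole carrier of a
type of class metric_space).\<close>

definition separated :: "'a::metric_space set \<Rightarrow> real \<Rightarrow> bool" where
  "separated S e \<longleftrightarrow> (\<forall>x\<in>S. \<forall>y\<in>S. x \<noteq> y \<longrightarrow> e \<le> dist x y)"

definition maximal_separated :: "'a::metric_space set \<Rightarrow> real \<Rightarrow> bool" where
  "maximal_separated S e \<longleftrightarrow> separated S e \<and> (\<forall>S'. S \<subseteq> S' \<and> separated S' e \<longrightarrow> S' = S)"

definition ha_vertices :: "real \<Rightarrow> (int \<Rightarrow> 'a::metric_space set) \<Rightarrow> (int \<times> 'a set) set" where
  "ha_vertices r V = {(k, ball v (2 * r powi k)) | k v. v \<in> V k}"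

definition lev :: "int \<times> 'a set \<Rightarrow> int" where
  "lev u = fst u"

definition Bl :: "int \<times> 'a set \<Rightarrow> 'a set" where
  "Bl u = snd u"

definition hor_edge :: "real \<Rightarrow> (int \<Rightarrow> 'a::metric_space set) \<Rightarrow> int \<times> 'a set \<Rightarrow> int \<times> 'a set \<Rightarrow> bool" where
  "hor_edge r V u u' \<longleftrightarrow> u \<in> ha_vertices r V \<and> u' \<in> ha_vertices r V \<and> u \<noteq> u' \<and> lev u = lev u' \<and>
     (\<exists>c\<in>V (lev u). \<exists>c'\<in>V (lev u). Bl u = ball c (2 * r powi lev u) \<and> Bl u' = ball c' (2 * r powi lev u)
        \<and> cball c (2 * r powi lev u) \<inter> cball c' (2 * r powi lev u) \<noteq> {})"

definition rad_edge :: "real \<Rightarrow> (int \<Rightarrow> 'a::metric_space set) \<Rightarrow> int \<times> 'a set \<Rightarrow> int \<times> 'a set \<Rightarrow> bool" where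
  "rad_edge r V u u' \<longleftrightarrow> u \<in> ha_vertices r V \<and> u' \<in> ha_vertices r V \<and>
     ((lev u' = lev u + 1 \<and> Bl u' \<subseteq> Bl u) \<or> (lev u = lev u' + 1 \<and> Bl u \<subseteq> Bl u'))"

definition radial_geodesic :: "real \<Rightarrow> (int \<Rightarrow> 'a::metric_space set) \<Rightarrow> (int \<times> 'a set) list \<Rightarrow> bool" where
  "radial_geodesic r V p \<longleftrightarrow> p \<noteq> [] \<and> set p \<subseteq> ha_vertices r V \<and>
     (\<forall>i. Suc i < length p \<longrightarrow> rad_edge r V (p ! i) (p ! Suc i)) \<and>
     (sorted (map lev p) \<or> sorted (rev (map lev p)))"

definition cone_point :: "real \<Rightarrow> (int \<Rightarrow> 'a::metric_space set) \<Rightarrow> int \<times> 'a set \<Rightarrow> (int \<times> 'a set) set \<Rightarrow> bool" where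
  "cone_point r V u W \<longleftrightarrow> u \<in> ha_vertices r V \<and> (\<forall>v\<in>W. lev u \<le> lev v) \<and>
     (\<forall>v\<in>W. \<exists>p. radial_geodesic r V p \<and> hd p = v \<and> last p = u)"

end

theory Submission
  imports Defs
begin

definition geo_to :: "real \<Rightarrow> (int \<Rightarrow> 'a::metric_space set) \<Rightarrow> int \<times> 'a set \<Rightarrow> int \<times> 'a set \<Rightarrow> bool" where
  "geo_to r V u W \<longleftrightarrow> (\<exists>p. radial_geodesic r V p \<and> hd p = u \<and> last p = W \<and> sorted (rev (map lev p)))"

lemma geo_refl: "W \<in> ha_vertices r V \<Longrightarrow> geo_to r V W W"
  unfolding geo_to_def radial_geodesic_def
  by (rule exI[of _ "[W]"]) auto

lemma geo_ext:
  assumes "geo_to r V u' W" "rad_edge r V u u'" "lev u' = lev u - 1"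
  shows "geo_to r V u W"
proof -
  obtain p where p: "radial_geodesic r V p" "hd p = u'" "last p = W" "sorted (rev (map lev p))"
    using assms(1) unfolding geo_to_def by blast
  obtain p0 where pe: "p = u' # p0" using p(1,2) unfolding radial_geodesic_def
    by (cases p) auto
  have uv: "u \<in> ha_vertices r V" using assms(2) unfolding rad_edge_def by blast
  have s: "sorted_wrt (\<ge>) (map lev p)" using p(4) by (simp add: sorted_wrt_rev)
  hence s2: "sorted_wrt (\<ge>) (map lev (u # p))" using assms(3) pe by auto
  have srt: "sorted (rev (map lev (u # p)))" using s2 by (metis sorted_wrt_rev)
  have "radial_geodesic r V (u # p)"
    unfolding radial_geodesic_def
  proof (intro conjI)
    show "set (u # p) \<subseteq> ha_vertices r V" using uv p(1) unfolding radial_geodesic_def by auto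
    show "\<forall>i. Suc i < length (u # p) \<longrightarrow> rad_edge r V ((u # p) ! i) ((u # p) ! Suc i)"
    proof (intro allI impI)
      fix i assume i: "Suc i < length (u # p)"
      show "rad_edge r V ((u # p) ! i) ((u # p) ! Suc i)"
      proof (cases i)
        case 0 then show ?thesis using assms(2) pe by simp
      next
        case (Suc j) then show ?thesis using p(1) i unfolding radial_geodesic_def by simp
      qed
    qed
    show "sorted (map lev (u # p)) \<or> sorted (rev (map lev (u # p)))"
      using srt by simp
  qed simp
  with srt show ?thesis unfolding geo_to_def using p pe by (intro exI[of _ "u # p"]) auto
qed

lemma ball_sub:
  fixes a b :: "'a::metric_space"
  assumes "dist a b + s \<le> t" shows "ball a s \<subseteq> ball b t"
proof
  fix y assume "y \<in> ball a s"
  hence "dist a y < s" by simp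
  moreover have "dist b y \<le> dist a b + dist a y"
    by (metis dist_commute dist_triangle)
  ultimately show "y \<in> ball b t" using assms by simp
qed

lemma near_point:
  fixes S :: "'a::metric_space set"
  assumes "maximal_separated S e" "0 < e"
  shows "\<exists>z\<in>S. dist z y < e"
proof (rule ccontr)
  assume "\<not> ?thesis"
  hence far: "\<forall>z\<in>S. e \<le> dist z y" by auto
  have yS: "y \<notin> S" using far assms(2) by force
  have "separated (insert y S) e"
    using assms(1) far unfolding maximal_separated_def separated_def
    by (auto simp: dist_commute)
  hence "insert y S = S" using assms(1) unfolding maximal_separated_def by blast
  thus False using yS by blast
qed

lemma vert: "z \<in> V j \<Longrightarrow> (j, ball z (2 * r powi j)) \<in> ha_vertices r V"
  unfolding ha_vertices_def by blast

lemma Rsucc: "(r::real) > 0 \<Longrightarrow> r powi (j + 1) = r powi j * r"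
  by (simp add: power_int_add_1)

lemma chainA:
  fixes r :: real and V :: "int \<Rightarrow> 'a::metric_space set"
  assumes r0: "0 < r" and r6: "r \<le> 1/6"
    and ms: "\<forall>k. maximal_separated (V k) (r powi k)"
    and wV: "w \<in> V (k - 1)" and xw: "dist x w < r powi (k - 1)"
    and cx: "dist c x < 2 * r powi (k + 1) + 2 * r powi k"
  shows "\<forall>z. z \<in> V (k + int n) \<and> dist z c < r powi (k + int n) \<longrightarrow>
     geo_to r V (k + int n, ball z (2 * r powi (k + int n))) (k - 1, ball w (2 * r powi (k - 1)))"
proof (induction n)
  case 0
  show ?case
  proof (intro allI impI)
    fix z assume z: "z \<in> V (k + int 0) \<and> dist z c < r powi (k + int 0)"
    define a where "a = r powi (k - 1)"
    have a0: "a > 0" using r0 unfolding a_def by simp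
    have Rk: "r powi k = a * r" unfolding a_def using Rsucc[OF r0, of "k-1"] by simp
    have Rk1: "r powi (k+1) = a * r * r" using Rsucc[OF r0, of k] Rk by simp
    have d1: "dist z w \<le> dist z c + dist c x + dist x w"
      by (meson dist_triangle order_trans add_right_mono)
    have ar: "a * r * r \<le> a * r / 6" using a0 r0 r6 by (simp add: mult_left_mono)
    have ar2: "a * r \<le> a / 6" using a0 r0 r6 by (simp add: mult_left_mono)
    have zc: "dist z c < a * r" using z Rk by simp
    have "dist z w + 2 * r powi k \<le> 2 * r powi (k - 1)"
      using d1 zc cx xw ar ar2 a0 unfolding a_def[symmetric] Rk Rk1 by linarith
    hence sub: "ball z (2 * r powi k) \<subseteq> ball w (2 * r powi (k - 1))" by (rule ball_sub)
    have e: "rad_edge r V (k, ball z (2 * r powi k)) (k - 1, ball w (2 * r powi (k - 1)))"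
      unfolding rad_edge_def lev_def Bl_def using sub vert[of w V "k - 1" r, OF wV] vert[of z V k r] z by auto
    show "geo_to r V (k + int 0, ball z (2 * r powi (k + int 0))) (k - 1, ball w (2 * r powi (k - 1)))"
      using geo_ext[OF geo_refl[OF vert[of w V "k - 1" r, OF wV]] e] by (simp add: lev_def)
  qed
next
  case (Suc n)
  show ?case
  proof (intro allI impI)
    fix z assume z: "z \<in> V (k + int (Suc n)) \<and> dist z c < r powi (k + int (Suc n))"
    define j where "j = k + int n"
    have jj: "k + int (Suc n) = j + 1" unfolding j_def by simp
    have b0: "r powi j > 0" using r0 by simp
    obtain z' where z': "z' \<in> V j" "dist z' c < r powi j"
      using near_point[OF ms[rule_format, of j], of c] b0 by blast
    have R: "r powi (j+1) = r powi j * r" by (rule Rsucc[OF r0])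
    have "dist z z' \<le> dist z c + dist z' c" by (metis dist_commute dist_triangle)
    moreover have "r powi j * r \<le> r powi j / 6" using b0 r6 by (simp add: mult_left_mono)
    moreover have zc: "dist z c < r powi j * r" using z R unfolding jj by simp
    ultimately have "dist z z' + 2 * r powi (j+1) \<le> 2 * r powi j"
      using z'(2) b0 unfolding R by linarith
    hence sub: "ball z (2 * r powi (j+1)) \<subseteq> ball z' (2 * r powi j)" by (rule ball_sub)
    have zV: "z \<in> V (j+1)" using z unfolding jj by simp
    have e: "rad_edge r V (j+1, ball z (2 * r powi (j+1))) (j, ball z' (2 * r powi j))"
      unfolding rad_edge_def lev_def Bl_def using sub vert[of z' V j r, OF z'(1)] vert[of z V "j+1" r, OF zV] by auto
    have g: "geo_to r V (j, ball z' (2 * r powi j)) (k - 1, ball w (2 * r powi (k - 1)))"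
      using Suc.IH z' unfolding j_def by blast
    show "geo_to r V (k + int (Suc n), ball z (2 * r powi (k + int (Suc n)))) (k - 1, ball w (2 * r powi (k - 1)))"
      unfolding jj using geo_ext[OF g e] by (simp add: lev_def)
  qed
qed


lemma chainB:
  fixes r :: real and V :: "int \<Rightarrow> 'a::metric_space set"
  assumes r0: "0 < r" and r6: "r \<le> 1/6"
    and ms: "\<forall>k. maximal_separated (V k) (r powi k)"
    and wV: "w \<in> V (k - 1)" and xw: "dist x w < r powi (k - 1)"
    and cV: "c \<in> V m" and mk: "k \<le> m"
    and cx: "dist c x < 2 * r powi m + 2 * r powi k"
  shows "geo_to r V (m, ball c (2 * r powi m)) (k - 1, ball w (2 * r powi (k - 1)))"
proof (cases "m = k")
  case True
  define a where "a = r powi (k - 1)"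
  have a0: "a > 0" using r0 unfolding a_def by simp
  have Rk: "r powi k = a * r" unfolding a_def using Rsucc[OF r0, of "k-1"] by simp
  have ar2: "a * r \<le> a / 6" using a0 r0 r6 by (simp add: mult_left_mono)
  have d1: "dist c w \<le> dist c x + dist x w"
    by (rule dist_triangle)
  have "dist c w + 2 * r powi k \<le> 2 * r powi (k - 1)"
    using d1 cx xw ar2 a0 unfolding a_def[symmetric] True Rk by linarith
  hence sub: "ball c (2 * r powi k) \<subseteq> ball w (2 * r powi (k - 1))" by (rule ball_sub)
  have e: "rad_edge r V (k, ball c (2 * r powi k)) (k - 1, ball w (2 * r powi (k - 1)))"
    unfolding rad_edge_def lev_def Bl_def using sub vert[of w V "k - 1" r, OF wV] vert[of c V m r, OF cV] True by auto
  show ?thesis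
    using geo_ext[OF geo_refl[OF vert[of w V "k - 1" r, OF wV]] e] True by (simp add: lev_def)
next
  case False
  define j where "j = m - 1"
  have mj: "m = j + 1" unfolding j_def by simp
  have b0: "r powi j > 0" using r0 by simp
  obtain z' where z': "z' \<in> V j" "dist z' c < r powi j"
    using near_point[OF ms[rule_format, of j], of c] b0 by blast
  have R: "r powi (j+1) = r powi j * r" by (rule Rsucc[OF r0])
  have "dist c z' \<le> dist z' c" by (simp add: dist_commute)
  moreover have "r powi j * r \<le> r powi j / 6" using b0 r6 by (simp add: mult_left_mono)
  ultimately have "dist c z' + 2 * r powi (j+1) \<le> 2 * r powi j"
    using z'(2) b0 unfolding R by linarith
  hence sub: "ball c (2 * r powi (j+1)) \<subseteq> ball z' (2 * r powi j)" by (rule ball_sub)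
  have cV': "c \<in> V (j+1)" using cV mj by simp
  have e: "rad_edge r V (j+1, ball c (2 * r powi (j+1))) (j, ball z' (2 * r powi j))"
    unfolding rad_edge_def lev_def Bl_def using sub vert[of z' V j r, OF z'(1)] vert[of c V "j+1" r, OF cV'] by auto
  have kj: "k \<le> j" using mk False mj by simp
  have "r powi m \<le> r powi (k + 1)"
    using power_int_decreasing[of "k+1" m r] kj mj r0 r6 by simp
  hence cx': "dist c x < 2 * r powi (k + 1) + 2 * r powi k" using cx by linarith
  define n where "n = nat (j - k)"
  have jn: "j = k + int n" unfolding n_def using kj by simp
  have "geo_to r V (k + int n, ball z' (2 * r powi (k + int n))) (k - 1, ball w (2 * r powi (k - 1)))"
    using chainA[OF r0 r6 ms wV xw cx', of n] z' unfolding jn by blast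
  hence g: "geo_to r V (j, ball z' (2 * r powi j)) (k - 1, ball w (2 * r powi (k - 1)))"
    unfolding jn .
  show ?thesis unfolding mj using geo_ext[OF g e] by (simp add: lev_def)
qed

theorem lemma3p9:
  fixes r :: real and V :: "int \<Rightarrow> 'a::metric_space set"
    and v v' v'' :: "int \<times> 'a set"
  assumes "0 < r" and "r \<le> 1/6"
    and "\<forall>k. maximal_separated (V k) (r powi k)"
    and "v \<in> ha_vertices r V" and "v' \<in> ha_vertices r V" and "v'' \<in> ha_vertices r V"
    and "lev v'' \<le> lev v" and "lev v'' \<le> lev v'"
    and "Bl v'' \<inter> Bl v \<noteq> {}" and "Bl v'' \<inter> Bl v' \<noteq> {}"
  shows "\<exists>w. cone_point r V w {v, v', v''} \<and> lev w = lev v'' - 1"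
proof -
  note r0 = assms(1) and r6 = assms(2) and ms = assms(3)
  obtain k x where v'': "v'' = (k, ball x (2 * r powi k))" "x \<in> V k"
    using assms(6) unfolding ha_vertices_def by blast
  obtain w where w: "w \<in> V (k - 1)" "dist w x < r powi (k - 1)"
    using near_point[OF ms[rule_format, of "k-1"], of x] r0 by auto
  have xw: "dist x w < r powi (k - 1)" using w by (simp add: dist_commute)
  define W where "W = (k - 1, ball w (2 * r powi (k - 1)))"
  have WV: "W \<in> ha_vertices r V" unfolding W_def by (rule vert[of w V "k - 1" r, OF w(1)])
  have G: "geo_to r V u W" if uV: "u \<in> ha_vertices r V" and lu: "lev v'' \<le> lev u"
    and int: "Bl v'' \<inter> Bl u \<noteq> {}" for u
  proof -
    obtain m c where u: "u = (m, ball c (2 * r powi m))" "c \<in> V m"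
      using uV unfolding ha_vertices_def by blast
    obtain y where y: "dist x y < 2 * r powi k" "dist c y < 2 * r powi m"
      using int unfolding u v'' Bl_def by auto
    have "dist c x \<le> dist c y + dist x y" by (rule dist_triangle2)
    hence cx: "dist c x < 2 * r powi m + 2 * r powi k" using y by linarith
    have mk: "k \<le> m" using lu unfolding u v'' lev_def by simp
    show ?thesis unfolding u W_def by (rule chainB[OF r0 r6 ms w(1) xw u(2) mk cx])
  qed
  have self: "Bl v'' \<inter> Bl v'' \<noteq> {}"
    unfolding v'' Bl_def using r0 by (simp add: not_le)
  have g1: "geo_to r V v W" using G[OF assms(4) assms(7) assms(9)] .
  have g2: "geo_to r V v' W" using G[OF assms(5) assms(8) assms(10)] .
  have g3: "geo_to r V v'' W" using G[OF assms(6) _ self] by simp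
  have lW: "lev W = lev v'' - 1" unfolding W_def v'' lev_def by simp
  have "cone_point r V W {v, v', v''}"
    unfolding cone_point_def
  proof (intro conjI ballI)
    show "W \<in> ha_vertices r V" by (rule WV)
  next
    fix u assume "u \<in> {v, v', v''}"
    thus "lev W \<le> lev u" using lW assms(7,8) by auto
  next
    fix u assume "u \<in> {v, v', v''}"
    hence "geo_to r V u W" using g1 g2 g3 by auto
    thus "\<exists>p. radial_geodesic r V p \<and> hd p = u \<and> last p = W" unfolding geo_to_def by blast
  qed
  thus ?thesis using lW by blast
qed

end
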